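(* Let $A$ and $B$ be symmetric $N\times N$ real matrices, and suppose $B$ has only $K\le N$ non-zero eigenvalues $\lambda_1^B,\dots,\lambda_K^B$. Let $\lambda_1^A,\dots,\lambda_K^A$ be the $K$ largest in absolute value eigenvalues of $A$. Then $$\Big|\sum_{k=1}^K\lambda_k^A-\sum_{k=1}^K\lambda_k^B\Big|\le 3K\|A-B\|.$$
   Context: $\|\cdot\|$ denotes the spectral (operator) norm. Eigenvalues are counted with multiplicity. *)

theory Defs
  imports "HOL-Analysis.Analysis"
begin

definition spec_norm :: "real^'n^'n \<Rightarrow> real" where
  "spec_norm M = onorm (\<lambda>x. M *v x)"

definition eigenvalue_list :: "real^'n^'n \<Rightarrow> real list \<Rightarrow> bool" where
  "eigenvalue_list M es \<longleftrightarrow> length es = CARD('n) \<and>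
     (\<forall>x. det (mat x - M) = (\<Prod>e\<leftarrow>es. x - e))"

end

theory Submission
  imports Defs "HOL-Computational_Algebra.Polynomial"
begin


lemma sym_inner:
  fixes M :: "real^'n^'n"
  assumes "transpose M = M"
  shows "(M *v x) \<bullet> y = x \<bullet> (M *v y)"
proof -
  have "M *v x = x v* M" using transpose_matrix_vector[of M x] assms by simp
  then show ?thesis by (simp add: dot_lmul_matrix)
qed

lemma quad_zero:
  fixes c d :: real
  assumes "\<And>t. 2*t*c + t^2*d \<le> 0"
  shows "c = 0"
proof (rule ccontr)
  assume "c \<noteq> 0"
  define a where "a = \<bar>d\<bar> + 1"
  define t where "t = c / a"
  have pos: "a > 0" unfolding a_def by simp
  have "2*t*c + t^2*d \<le> 0" by (rule assms)
  then have "a^2 * (2*t*c + t^2*d) \<le> 0"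
    by (simp add: mult_nonneg_nonpos)
  moreover have "a^2 * (2*t*c + t^2*d) = c^2 * (2*a + d)"
    unfolding t_def using pos by (simp add: field_simps power2_eq_square)
  moreover have "c^2 * (2*a + d) > 0"
    using \<open>c \<noteq> 0\<close> unfolding a_def by (intro mult_pos_pos) auto
  ultimately show False by linarith
qed

lemma eig_exists:
  fixes M :: "real^'n^'n"
  assumes sym: "transpose M = M" and S: "subspace S" and nz: "x0 \<in> S" "x0 \<noteq> 0"
    and inv: "\<And>x. x \<in> S \<Longrightarrow> M *v x \<in> S"
  shows "\<exists>v\<in>S. norm v = 1 \<and> M *v v = (v \<bullet> (M *v v)) *\<^sub>R v"
proof -
  let ?K = "S \<inter> sphere 0 1"
  have "compact ?K"
    using S by (simp add: closed_subspace closed_Int_compact)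
  moreover have "x0 /\<^sub>R norm x0 \<in> ?K" using nz S by (simp add: subspace_scale)
  then have "?K \<noteq> {}" by blast
  moreover have "continuous_on ?K (\<lambda>x. x \<bullet> (M *v x))"
    by (intro continuous_intros linear_continuous_on matrix_vector_mul_bounded_linear)
  ultimately obtain v where v: "v \<in> ?K" and vmax: "\<And>y. y \<in> ?K \<Longrightarrow> y \<bullet> (M *v y) \<le> v \<bullet> (M *v v)"
    using continuous_attains_sup[of ?K "\<lambda>x. x \<bullet> (M *v x)"] by blast
  define l where "l = v \<bullet> (M *v v)"
  have vS: "v \<in> S" and nv: "norm v = 1" using v by auto
  have vv: "v \<bullet> v = 1" using nv by (simp add: norm_eq_1)
  have bound: "y \<bullet> (M *v y) \<le> l * (y \<bullet> y)" if "y \<in> S" for y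
  proof (cases "y = 0")
    case True then show ?thesis by simp
  next
    case False
    have "y /\<^sub>R norm y \<in> ?K" using that False S by (simp add: subspace_scale)
    then have "(y /\<^sub>R norm y) \<bullet> (M *v (y /\<^sub>R norm y)) \<le> l" using vmax l_def by blast
    then have "(y \<bullet> (M *v y)) / (norm y)^2 \<le> l"
      by (simp add: matrix_vector_mult_scaleR power2_eq_square divide_inverse mult_ac)
    then show ?thesis using False
      by (simp add: divide_le_eq power2_norm_eq_inner[symmetric] mult.commute)
  qed
  have orth: "w \<bullet> (M *v v) = 0" if w: "w \<in> S" "w \<bullet> v = 0" for w
  proof (rule quad_zero[where d = "w \<bullet> (M *v w) - l * (w \<bullet> w)"])
    fix t :: real
    have "v + t *\<^sub>R w \<in> S" using S vS w by (simp add: subspace_add subspace_scale)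
    from bound[OF this]
    have "(v + t *\<^sub>R w) \<bullet> (M *v (v + t *\<^sub>R w)) \<le> l * ((v + t *\<^sub>R w) \<bullet> (v + t *\<^sub>R w))" .
    moreover have "v \<bullet> (M *v w) = w \<bullet> (M *v v)"
      using sym_inner[OF sym, of v w] by (simp add: inner_commute)
    moreover have "w \<bullet> v = 0" "v \<bullet> w = 0" using w by (auto simp: inner_commute)
    ultimately show "2*t*(w \<bullet> (M *v v)) + t^2*(w \<bullet> (M *v w) - l * (w \<bullet> w)) \<le> 0"
      by (simp add: matrix_vector_right_distrib matrix_vector_mult_scaleR inner_add_left
          inner_add_right l_def vv algebra_simps power2_eq_square)
  qed
  define r where "r = M *v v - l *\<^sub>R v"
  have rS: "r \<in> S" unfolding r_def using S vS inv by (simp add: subspace_diff subspace_scale)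
  have rv: "r \<bullet> v = 0"
    unfolding r_def l_def using vv by (simp add: inner_diff_left inner_commute[of "M *v v"])
  have "r \<bullet> r = r \<bullet> (M *v v) - l * (r \<bullet> v)"
    unfolding r_def[of] by (simp add: inner_diff_right r_def)
  then have "r \<bullet> r = 0" using orth[OF rS rv] rv by simp
  then have "r = 0" by simp
  then show ?thesis using vS nv unfolding r_def l_def by auto
qed



lemma eig_basis:
  fixes M :: "real^'n^'n"
  assumes sym: "transpose M = M"
  shows "subspace S \<Longrightarrow> (\<And>x. x \<in> S \<Longrightarrow> M *v x \<in> S) \<Longrightarrow>
    \<exists>B. finite B \<and> B \<subseteq> S \<and> pairwise orthogonal B \<and>
        (\<forall>x\<in>B. norm x = 1 \<and> M *v x = (x \<bullet> (M *v x)) *\<^sub>R x) \<and> card B = dim S"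
proof (induction "dim S" arbitrary: S)
  case 0
  then show ?case by (intro exI[of _ "{}"]) auto
next
  case (Suc n)
  have "\<not> S \<subseteq> {0}" using Suc.hyps(2) by (metis dim_eq_0 nat.simps(3))
  then obtain x0 where x0: "x0 \<in> S" "x0 \<noteq> 0" by blast
  obtain v where vS: "v \<in> S" and nv: "norm v = 1" and ev: "M *v v = (v \<bullet> (M *v v)) *\<^sub>R v"
    using eig_exists[OF sym Suc.prems(1) x0 Suc.prems(2)] by blast
  define l where "l = v \<bullet> (M *v v)"
  have vv: "v \<bullet> v = 1" using nv by (simp add: norm_eq_1)
  define S' where "S' = {x\<in>S. v \<bullet> x = 0}"
  have sub': "subspace S'"
    using Suc.prems(1) unfolding S'_def subspace_def by (auto simp: inner_add_right)
  have inv': "M *v x \<in> S'" if "x \<in> S'" for x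
  proof -
    have "v \<bullet> (M *v x) = (M *v v) \<bullet> x" using sym_inner[OF sym, of v x] by simp
    also have "\<dots> = 0" using that ev unfolding S'_def by (metis (mono_tags) inner_scaleR_left mem_Collect_eq mult_zero_right)
    finally show ?thesis using that Suc.prems(2) unfolding S'_def by auto
  qed
  have sumeq: "{x + y |x y. x \<in> S' \<and> y \<in> span {v}} = S"
  proof (intro set_eqI iffI)
    fix z assume "z \<in> {x + y |x y. x \<in> S' \<and> y \<in> span {v}}"
    then obtain x y where "z = x + y" "x \<in> S'" "y \<in> span {v}" by blast
    moreover have "span {v} \<subseteq> S" using vS Suc.prems(1) by (simp add: span_minimal)
    ultimately show "z \<in> S" using Suc.prems(1) unfolding S'_def by (auto intro: subspace_add)
  next
    fix z assume z: "z \<in> S"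
    have "z - (v \<bullet> z) *\<^sub>R v \<in> S'"
      unfolding S'_def using z vS Suc.prems(1) vv
      by (auto simp: subspace_diff subspace_scale inner_diff_right)
    moreover have "(v \<bullet> z) *\<^sub>R v \<in> span {v}" by (simp add: span_base span_scale)
    moreover have "z = (z - (v \<bullet> z) *\<^sub>R v) + (v \<bullet> z) *\<^sub>R v" by simp
    ultimately show "z \<in> {x + y |x y. x \<in> S' \<and> y \<in> span {v}}" by blast
  qed
  have inteq: "S' \<inter> span {v} = {0}"
  proof (intro set_eqI iffI)
    fix z assume "z \<in> S' \<inter> span {v}"
    then obtain c where "z = c *\<^sub>R v" "v \<bullet> z = 0" unfolding S'_def by (auto simp: span_singleton)
    then show "z \<in> {0}" using vv by simp
  next
    fix z :: "real^'n" assume "z \<in> {0}" then show "z \<in> S' \<inter> span {v}" using sub' by (simp add: subspace_0 span_zero)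
  qed
  have "dim S + dim (S' \<inter> span {v}) = dim S' + dim (span {v})"
    using dim_sums_Int[OF sub' subspace_span[of "{v}"]] sumeq by simp
  moreover have "dim (span {v}) = 1" using nv by (auto simp: dim_insert)
  ultimately have dS': "n = dim S'" using inteq Suc.hyps(2) by simp
  obtain B' where B': "finite B'" "B' \<subseteq> S'" "pairwise orthogonal B'"
    "\<forall>x\<in>B'. norm x = 1 \<and> M *v x = (x \<bullet> (M *v x)) *\<^sub>R x" "card B' = dim S'"
    using Suc.hyps(1)[OF dS' sub' inv'] by blast
  have vB': "v \<notin> B'" using B'(2) vv unfolding S'_def by auto
  show ?case
  proof (intro exI[of _ "insert v B'"] conjI)
    show "finite (insert v B')" using B' by simp
    show "insert v B' \<subseteq> S" using B'(2) vS unfolding S'_def by auto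
    show "pairwise orthogonal (insert v B')"
      using B'(2,3) unfolding pairwise_insert S'_def
      by (auto simp: orthogonal_def inner_commute)
    show "\<forall>x\<in>insert v B'. norm x = 1 \<and> M *v x = (x \<bullet> (M *v x)) *\<^sub>R x" using B'(4) nv ev by auto
    show "card (insert v B') = dim S" using B'(1,5) vB' dS' Suc.hyps(2) by simp
  qed
qed

lemma spectral:
  fixes M :: "real^'n^'n"
  assumes sym: "transpose M = M"
  obtains Q \<mu> where "orthogonal_matrix Q" "\<And>i. M *v column i Q = \<mu> i *\<^sub>R column i Q"
proof -
  obtain B where B: "finite B" "pairwise orthogonal B"
    "\<forall>x\<in>B. norm x = 1 \<and> M *v x = (x \<bullet> (M *v x)) *\<^sub>R x" "card B = dim (UNIV :: (real^'n) set)"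
    using eig_basis[OF sym, of UNIV] by auto
  have "card B = CARD('n)" using B(4) by (simp add: dim_UNIV)
  then obtain f where f: "bij_betw f (UNIV::'n set) B"
    by (metis B(1) finite_class.finite_UNIV finite_same_card_bij)
  have col: "column j (\<chi> i j. f j $ i) = f j" for j by (simp add: column_def vec_eq_iff)
  have nf[simp]: "\<And>i. norm (f i) = 1"
    using bij_betwE [OF f] B(3) by blast
  have [simp]: "\<And>i j. i \<noteq> j \<Longrightarrow> orthogonal (f i) (f j)"
    using B(2) f by (auto simp: pairwise_def bij_betw_def inj_on_def)
  show thesis
  proof
    show "orthogonal_matrix (\<chi> i j. f j $ i)"
      by (simp add: orthogonal_matrix_orthonormal_columns col)
    show "M *v column i (\<chi> i j. f j $ i) = (f i \<bullet> (M *v f i)) *\<^sub>R column i (\<chi> i j. f j $ i)" for i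
      using bij_betwE [OF f] B(3) by (simp add: col)
  qed
qed



lemma col_mult: "column j (N ** Q) = N *v column j (Q::real^'n^'n)"
  by (simp add: vec_eq_iff matrix_matrix_mult_def matrix_vector_mult_def column_def)

lemma mat_mult_vec: "mat x *v (v::real^'n) = x *\<^sub>R v"
  by (simp add: vec_eq_iff matrix_vector_mult_def mat_def if_distrib[of "\<lambda>a. a * _"] cong: if_cong)

lemma transpose_mult_entry:
  "(transpose Q ** P) $ i $ j = column i Q \<bullet> column j (P::real^'n^'n)"
  by (simp add: matrix_matrix_mult_def transpose_def column_def inner_vec_def mult.commute)

lemma charpoly_diag:
  fixes M Q :: "real^'n^'n"
  assumes Q: "orthogonal_matrix Q" and ev: "\<And>i. M *v column i Q = \<mu> i *\<^sub>R column i Q"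
  shows "det (mat x - M) = (\<Prod>i\<in>UNIV. x - \<mu> i)"
proof -
  let ?N = "mat x - M"
  have on: "\<And>i. norm (column i Q) = 1" "\<And>i j. i \<noteq> j \<Longrightarrow> orthogonal (column i Q) (column j Q)"
    using Q by (auto simp: orthogonal_matrix_orthonormal_columns)
  have cc: "column i Q \<bullet> column j Q = (if i = j then 1 else 0)" for i j
    using on[of i] on(2)[of i j] by (auto simp: orthogonal_def norm_eq_1)
  have entry: "(transpose Q ** ?N ** Q) $ i $ j = (if i = j then x - \<mu> i else 0)" for i j
  proof -
    have "(transpose Q ** ?N ** Q) $ i $ j = column i Q \<bullet> (?N *v column j Q)"
      by (simp only: matrix_mul_assoc[symmetric] transpose_mult_entry col_mult)
    also have "?N *v column j Q = (x - \<mu> j) *\<^sub>R column j Q"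
      by (simp add: matrix_vector_mult_diff_rdistrib ev algebra_simps mat_mult_vec)
    finally show ?thesis by (simp add: cc)
  qed
  have "det (transpose Q ** ?N ** Q) = (\<Prod>i\<in>UNIV. x - \<mu> i)"
    by (subst det_diagonal) (auto simp: entry)
  moreover have "det (transpose Q ** ?N ** Q) = det ?N * (det Q * det Q)"
    by (simp add: det_mul det_transpose)
  moreover have "det Q * det Q = 1" using det_orthogonal_matrix[OF Q] by auto
  ultimately show ?thesis by simp
qed

definition lin_poly :: "real multiset \<Rightarrow> real poly" where
  "lin_poly A = prod_mset (image_mset (\<lambda>e. [:-e, 1:]) A)"

lemma poly_lin_poly: "poly (lin_poly A) x = (\<Prod>e\<in>#A. x - e)"
  unfolding lin_poly_def poly_prod_mset by simp

lemma lin_poly_inj: "lin_poly A = lin_poly B \<Longrightarrow> A = B"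
proof (induction A arbitrary: B)
  case empty
  show ?case
  proof (rule ccontr)
    assume "{#} \<noteq> B"
    then obtain b where b: "b \<in># B" by (metis multiset_nonemptyE)
    have "poly (lin_poly B) b = 0" using b by (simp add: poly_lin_poly prod_mset_zero_iff)
    moreover have "poly (lin_poly {#}) b = 1" by (simp add: poly_lin_poly)
    ultimately show False using empty by simp
  qed
next
  case (add a A)
  have "poly (lin_poly B) a = 0" using add.prems[symmetric] by (simp add: poly_lin_poly)
  then have "a \<in># B" by (auto simp: poly_lin_poly prod_mset_zero_iff)
  then obtain B' where B': "B = add_mset a B'" by (metis multi_member_split)
  have "[:-a, 1:] * lin_poly A = [:-a, 1:] * lin_poly B'"
    using add.prems B' by (simp add: lin_poly_def)
  moreover have nz: "[:-a, 1:] \<noteq> (0::real poly)" by simp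
  ultimately have "lin_poly A = lin_poly B'" using mult_left_cancel[OF nz] by blast
  then show ?case using add.IH B' by simp
qed

lemma mset_from_charpoly:
  fixes es :: "real list" and \<mu> :: "'n::finite \<Rightarrow> real"
  assumes "\<And>x. (\<Prod>e\<leftarrow>es. x - e) = (\<Prod>i\<in>UNIV. x - \<mu> i)"
  shows "mset es = image_mset \<mu> (mset_set UNIV)"
proof -
  have "poly (lin_poly (mset es)) x = poly (lin_poly (image_mset \<mu> (mset_set UNIV))) x" for x
    using assms[of x]
    by (simp add: poly_lin_poly prod_unfold_prod_mset prod_mset_prod_list[symmetric] multiset.map_comp o_def)
  then have "poly (lin_poly (mset es)) = poly (lin_poly (image_mset \<mu> (mset_set UNIV)))" by auto
  then show ?thesis using lin_poly_inj poly_eq_poly_eq_iff by blast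
qed



lemma orth_expand:
  fixes P :: "real^'n^'n"
  assumes P: "orthogonal_matrix P"
  shows "x = (\<Sum>i\<in>UNIV. (column i P \<bullet> x) *\<^sub>R column i P)"
proof -
  have "x = (P ** transpose P) *v x"
    using P by (simp add: orthogonal_matrix_def)
  also have "\<dots> = P *v (transpose P *v x)" by (simp only: matrix_vector_mul_assoc)
  also have "\<dots> = (\<Sum>i\<in>UNIV. ((transpose P *v x) $ i) *\<^sub>R column i P)"
    by (simp add: matrix_mult_sum scalar_mult_eq_scaleR)
  also have "(\<lambda>i. (transpose P *v x) $ i) = (\<lambda>i. column i P \<bullet> x)"
    by (simp add: fun_eq_iff matrix_vector_mult_def vector_matrix_mult_def transpose_def column_def inner_vec_def mult.commute)
  finally show ?thesis .
qed

lemma orth_normsq: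
  fixes P :: "real^'n^'n"
  assumes P: "orthogonal_matrix P"
  shows "x \<bullet> x = (\<Sum>i\<in>UNIV. (column i P \<bullet> x)^2)"
proof -
  have "x \<bullet> x = (\<Sum>i\<in>UNIV. (column i P \<bullet> x) *\<^sub>R column i P) \<bullet> x"
    using orth_expand[OF P, of x] by simp
  also have "\<dots> = (\<Sum>i\<in>UNIV. (column i P \<bullet> x)^2)"
    by (simp add: inner_sum_left power2_eq_square)
  finally show ?thesis .
qed

lemma orth_quad:
  fixes P A :: "real^'n^'n"
  assumes P: "orthogonal_matrix P" and sym: "transpose A = A"
    and ev: "\<And>i. A *v column i P = \<alpha> i *\<^sub>R column i P"
  shows "x \<bullet> (A *v x) = (\<Sum>i\<in>UNIV. \<alpha> i * (column i P \<bullet> x)^2)"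
proof -
  have "x \<bullet> (A *v x) = (\<Sum>i\<in>UNIV. (column i P \<bullet> x) *\<^sub>R column i P) \<bullet> (A *v x)"
    using orth_expand[OF P, of x] by simp
  also have "\<dots> = (\<Sum>i\<in>UNIV. (column i P \<bullet> x) * (column i P \<bullet> (A *v x)))"
    by (simp add: inner_sum_left)
  also have "\<dots> = (\<Sum>i\<in>UNIV. \<alpha> i * (column i P \<bullet> x)^2)"
  proof (rule sum.cong[OF refl])
    fix i
    have "column i P \<bullet> (A *v x) = (A *v column i P) \<bullet> x" using sym_inner[OF sym] by simp
    then show "(column i P \<bullet> x) * (column i P \<bullet> (A *v x)) = \<alpha> i * (column i P \<bullet> x)^2"
      by (simp add: ev power2_eq_square)
  qed
  finally show ?thesis .
qed

lemma span_coord_zero: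
  fixes P :: "real^'n^'n"
  assumes P: "orthogonal_matrix P" and x: "x \<in> span ((\<lambda>i. column i P) ` J)" and j: "j \<notin> J"
  shows "column j P \<bullet> x = 0"
proof -
  have "orthogonal (column j P) x"
    using x
  proof (rule orthogonal_to_span)
    fix y assume "y \<in> (\<lambda>i. column i P) ` J"
    then obtain i where "i \<in> J" "y = column i P" by blast
    moreover have "i \<noteq> j" using \<open>i \<in> J\<close> j by blast
    ultimately show "orthogonal (column j P) y" using P
      by (metis orthogonal_matrix_orthonormal_columns)
  qed
  then show ?thesis by (simp add: orthogonal_def)
qed

lemma dim_cols:
  fixes P :: "real^'n^'n"
  assumes P: "orthogonal_matrix P"
  shows "dim (span ((\<lambda>i. column i P) ` J)) = card J"
proof -
  have on: "\<And>i. norm (column i P) = 1" "\<And>i j. i \<noteq> j \<Longrightarrow> orthogonal (column i P) (column j P)"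
    using P by (auto simp: orthogonal_matrix_orthonormal_columns)
  have inj: "inj (\<lambda>i. column i P)"
  proof (rule injI)
    fix i j assume "column i P = column j P"
    then show "i = j" using on by (metis norm_eq_1 one_neq_zero orthogonal_def)
  qed
  have "pairwise orthogonal ((\<lambda>i. column i P) ` J)"
  proof (clarsimp simp: pairwise_def)
    fix i j assume "column i P \<noteq> column j P"
    then have "i \<noteq> j" by auto
    then show "orthogonal (column i P) (column j P)" using on(2) by blast
  qed
  moreover have "0 \<notin> (\<lambda>i. column i P) ` J"
    using on(1) by (metis imageE norm_zero zero_neq_one)
  ultimately have "independent ((\<lambda>i. column i P) ` J)"
    by (rule pairwise_orthogonal_independent)
  then have "dim (span ((\<lambda>i. column i P) ` J)) = card ((\<lambda>i. column i P) ` J)"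
    by (metis dim_span_eq_card_independent)
  also have "\<dots> = card J" using inj by (simp add: card_image inj_on_subset)
  finally show ?thesis .
qed

lemma subspace_meet:
  fixes V W :: "(real^'n) set"
  assumes "subspace V" "subspace W" "dim V + dim W > CARD('n)"
  shows "\<exists>x\<in>V \<inter> W. x \<noteq> 0"
proof -
  have "dim {x + y |x y. x \<in> V \<and> y \<in> W} \<le> CARD('n)"
    using dim_subset_UNIV[of "{x + y |x y. x \<in> V \<and> y \<in> W}"] by simp
  then have "dim (V \<inter> W) > 0" using dim_sums_Int[OF assms(1,2)] assms(3) by linarith
  then have "\<not> V \<inter> W \<subseteq> {0}" using dim_eq_0 by (metis less_irrefl)
  then show ?thesis by blast
qed

lemma weyl_count:
  fixes A B P Q :: "real^'n^'n"
  assumes symA: "transpose A = A" and symB: "transpose B = B"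
    and P: "orthogonal_matrix P" and evA: "\<And>i. A *v column i P = \<alpha> i *\<^sub>R column i P"
    and Q: "orthogonal_matrix Q" and evB: "\<And>i. B *v column i Q = \<beta> i *\<^sub>R column i Q"
    and cmp: "\<And>x. x \<bullet> (A *v x) \<le> x \<bullet> (B *v x) + \<epsilon> * (x \<bullet> x)"
  shows "card {i. t + \<epsilon> < \<alpha> i} \<le> card {i. t < \<beta> i}"
proof (rule ccontr)
  assume neg: "\<not> ?thesis"
  define J where "J = {i. t + \<epsilon> < \<alpha> i}"
  define L where "L = {i. \<beta> i \<le> t}"
  define V where "V = span ((\<lambda>i. column i P) ` J)"
  define W where "W = span ((\<lambda>i. column i Q) ` L)"
  have "card L + card {i. t < \<beta> i} = CARD('n)"
    unfolding L_def by (subst card_Un_disjoint[symmetric]) (auto intro: arg_cong[where f=card])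
  then have "dim V + dim W > CARD('n)"
    unfolding V_def W_def using dim_cols[OF P] dim_cols[OF Q] neg J_def by simp
  then obtain x where x: "x \<in> V" "x \<in> W" "x \<noteq> 0"
    using subspace_meet[of V W] unfolding V_def W_def by auto
  have cP: "column i P \<bullet> x = 0" if "i \<notin> J" for i
    using span_coord_zero[OF P _ that] x(1) V_def by blast
  have cQ: "column i Q \<bullet> x = 0" if "i \<notin> L" for i
    using span_coord_zero[OF Q _ that] x(2) W_def by blast
  have xx: "x \<bullet> x > 0" using x(3) by simp
  have "x \<bullet> (A *v x) - (t + \<epsilon>) * (x \<bullet> x) = (\<Sum>i\<in>UNIV. (\<alpha> i - (t + \<epsilon>)) * (column i P \<bullet> x)^2)"
    by (simp add: orth_quad[OF P symA evA] orth_normsq[OF P, of x] sum_distrib_left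
        sum_subtractf[symmetric] algebra_simps)
  also have "\<dots> > 0"
  proof -
    have "\<not> (\<forall>k. column k P \<bullet> x = 0)"
    proof
      assume "\<forall>k. column k P \<bullet> x = 0"
      then have "(\<Sum>i\<in>UNIV. (column i P \<bullet> x)^2) = 0" by simp
      then show False using xx orth_normsq[OF P, of x] by simp
    qed
    then obtain k where k: "column k P \<bullet> x \<noteq> 0" by blast
    then have "k \<in> J" using cP by blast
    show ?thesis
    proof (rule sum_pos2[of UNIV k])
      show "0 < (\<alpha> k - (t + \<epsilon>)) * (column k P \<bullet> x)^2"
        using k \<open>k \<in> J\<close> J_def by (simp add: mult_pos_pos)
      show "\<And>i. i \<in> UNIV \<Longrightarrow> 0 \<le> (\<alpha> i - (t + \<epsilon>)) * (column i P \<bullet> x)^2"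
        using cP J_def by (case_tac "i \<in> J") auto
    qed auto
  qed
  finally have 1: "x \<bullet> (A *v x) > (t + \<epsilon>) * (x \<bullet> x)" by simp
  have "x \<bullet> (B *v x) - t * (x \<bullet> x) = (\<Sum>i\<in>UNIV. (\<beta> i - t) * (column i Q \<bullet> x)^2)"
    by (simp add: orth_quad[OF Q symB evB] orth_normsq[OF Q, of x] sum_distrib_left
        sum_subtractf[symmetric] algebra_simps)
  also have "\<dots> \<le> 0"
  proof (rule sum_nonpos)
    fix i
    show "(\<beta> i - t) * (column i Q \<bullet> x)^2 \<le> 0"
      using cQ[of i] L_def by (cases "i \<in> L") (auto simp: mult_nonpos_nonneg)
  qed
  finally have 2: "x \<bullet> (B *v x) \<le> t * (x \<bullet> x)" by simp
  show False using 1 2 cmp[of x] by (simp add: algebra_simps)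
qed



lemma count_list:
  assumes "mset es = image_mset \<alpha> (mset_set (UNIV::'n::finite set))"
  shows "length (filter P es) = card {i. P (\<alpha> i)}"
proof -
  have "length (filter P es) = size (filter_mset P (mset es))"
    by (metis mset_filter size_mset)
  also have "\<dots> = size (image_mset \<alpha> (filter_mset (\<lambda>i. P (\<alpha> i)) (mset_set UNIV)))"
    using assms by (simp add: image_mset_filter_mset_swap[symmetric])
  also have "\<dots> = card {i. P (\<alpha> i)}" by simp
  finally show ?thesis .
qed

lemma sorted_match_one:
  fixes xs ys :: "real list"
  assumes sx: "sorted xs" and sy: "sorted ys" and len: "length ys = length xs"
    and cnt: "\<And>s. length (filter (\<lambda>e. s + \<epsilon> < e) xs) \<le> length (filter (\<lambda>e. s < e) ys)"
    and i: "i < length xs"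
  shows "xs ! i \<le> ys ! i + \<epsilon>"
proof (rule ccontr)
  assume "\<not> ?thesis"
  then have gt: "ys ! i + \<epsilon> < xs ! i" by simp
  define s where "s = ys ! i"
  define N where "N = length xs"
  have "{i..<N} \<subseteq> {j. j < length xs \<and> s + \<epsilon> < xs ! j}"
  proof
    fix j assume "j \<in> {i..<N}"
    then have "xs ! i \<le> xs ! j" "j < length xs" using sorted_nth_mono[OF sx] N_def by auto
    then show "j \<in> {j. j < length xs \<and> s + \<epsilon> < xs ! j}" using gt s_def by auto
  qed
  then have "N - i \<le> card {j. j < length xs \<and> s + \<epsilon> < xs ! j}"
    by (metis card_atLeastLessThan card_mono finite_Collect_conjI finite_Collect_less_nat)
  also have "\<dots> = length (filter (\<lambda>e. s + \<epsilon> < e) xs)" by (simp add: length_filter_conv_card)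
  also have "\<dots> \<le> length (filter (\<lambda>e. s < e) ys)" by (rule cnt)
  also have "\<dots> = card {j. j < length ys \<and> s < ys ! j}" by (simp add: length_filter_conv_card)
  also have "\<dots> \<le> card {Suc i..<N}"
  proof (rule card_mono)
    show "{j. j < length ys \<and> s < ys ! j} \<subseteq> {Suc i..<N}"
    proof
      fix j assume j: "j \<in> {j. j < length ys \<and> s < ys ! j}"
      have "\<not> j \<le> i"
      proof
        assume "j \<le> i"
        then have "ys ! j \<le> ys ! i" using sorted_nth_mono[OF sy] i len by auto
        then show False using j s_def by auto
      qed
      then show "j \<in> {Suc i..<N}" using j len N_def by auto
    qed
  qed simp
  also have "\<dots> = N - Suc i" by simp
  finally show False using i N_def by linarith
qed

lemma match_lists:
  fixes ea eb :: "real list"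
  assumes len: "length eb = length ea"
    and c1: "\<And>s. length (filter (\<lambda>e. s + \<epsilon> < e) ea) \<le> length (filter (\<lambda>e. s < e) eb)"
    and c2: "\<And>s. length (filter (\<lambda>e. s + \<epsilon> < e) eb) \<le> length (filter (\<lambda>e. s < e) ea)"
  shows "\<exists>b'. mset b' = mset eb \<and> length b' = length ea \<and> (\<forall>i<length ea. \<bar>ea ! i - b' ! i\<bar> \<le> \<epsilon>)"
proof -
  define sa where "sa = sort ea"
  define sb where "sb = sort eb"
  have msa: "mset sa = mset ea" and msb: "mset sb = mset eb" unfolding sa_def sb_def by simp_all
  have filt: "length (filter P (sort xs)) = length (filter P xs)" for P and xs :: "real list"
    by (metis mset_filter mset_sort size_mset)
  have lsa: "length sa = length ea" and lsb: "length sb = length ea"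
    unfolding sa_def sb_def using len by simp_all
  have m1: "sa ! i \<le> sb ! i + \<epsilon>" if "i < length ea" for i
    by (rule sorted_match_one) (use that lsa lsb c1 filt in \<open>auto simp: sa_def sb_def\<close>)
  have m2: "sb ! i \<le> sa ! i + \<epsilon>" if "i < length ea" for i
    by (rule sorted_match_one) (use that lsa lsb c2 filt in \<open>auto simp: sa_def sb_def\<close>)
  obtain p where p: "p permutes {..<length sa}" "permute_list p sa = ea"
    using mset_eq_permutation[of ea sa] msa by metis
  define b' where "b' = permute_list p sb"
  have pb: "p permutes {..<length sb}" using p(1) lsa lsb by simp
  show ?thesis
  proof (intro exI[of _ b'] conjI allI impI)
    show "mset b' = mset eb" unfolding b'_def using pb msb by simp
    show "length b' = length ea" unfolding b'_def using lsb by simp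
    fix i assume i: "i < length ea"
    have pi: "p i < length ea" using permutes_in_image[OF p(1)] i lsa by auto
    have "ea ! i = sa ! p i" using p i lsa permute_list_nth by metis
    moreover have "b' ! i = sb ! p i" unfolding b'_def using pb i lsb permute_list_nth by metis
    ultimately show "\<bar>ea ! i - b' ! i\<bar> \<le> \<epsilon>" using m1[OF pi] m2[OF pi] by auto
  qed
qed



lemma sum_list_filter_nz: "sum_list (filter (\<lambda>e. e \<noteq> 0) xs) = sum_list (xs::real list)"
  by (induction xs) auto

lemma final_comb:
  fixes a b :: "real list"
  assumes len: "length b = length a" and close: "\<forall>i<length a. \<bar>a ! i - b ! i\<bar> \<le> \<epsilon>"
    and eps: "\<epsilon> \<ge> 0" and srt: "sorted_wrt (\<lambda>x y. \<bar>x\<bar> \<ge> \<bar>y\<bar>) a"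
    and cK: "length (filter (\<lambda>e. e \<noteq> 0) b) = K" and KN: "K \<le> length a"
  shows "\<bar>sum_list (take K a) - sum_list (filter (\<lambda>e. e \<noteq> 0) b)\<bar> \<le> 3 * real K * \<epsilon>"
proof -
  define N where "N = length a"
  define S where "S = {..<K}"
  define T where "T = {i. i < N \<and> b ! i \<noteq> 0}"
  have finT: "finite T" and finS: "finite S" unfolding S_def T_def by auto
  have cT: "card T = K" using cK len unfolding T_def N_def by (simp add: length_filter_conv_card)
  have cS: "card S = K" unfolding S_def by simp
  have TN: "T \<subseteq> {..<N}" and SN: "S \<subseteq> {..<N}" unfolding T_def S_def N_def using KN by auto
  have sa: "sum_list (take K a) = (\<Sum>i\<in>S. a ! i)"
    unfolding S_def using KN by (simp add: sum_list_sum_nth atLeast0LessThan)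
  have "sum_list (filter (\<lambda>e. e \<noteq> 0) b) = (\<Sum>i\<in>{..<N}. b ! i)"
    using len unfolding N_def sum_list_filter_nz by (simp add: sum_list_sum_nth atLeast0LessThan)
  also have "\<dots> = (\<Sum>i\<in>T. b ! i)"
    by (rule sum.mono_neutral_right) (auto simp: T_def)
  finally have sb: "sum_list (filter (\<lambda>e. e \<noteq> 0) b) = (\<Sum>i\<in>T. b ! i)" .
  have small: "\<bar>a ! i\<bar> \<le> \<epsilon>" if "i < N" "i \<notin> T" for i
    using close that unfolding T_def N_def by auto
  have d1: "\<bar>(\<Sum>i\<in>T. a ! i) - (\<Sum>i\<in>T. b ! i)\<bar> \<le> real K * \<epsilon>"
  proof -
    have "\<bar>(\<Sum>i\<in>T. a ! i) - (\<Sum>i\<in>T. b ! i)\<bar> = \<bar>\<Sum>i\<in>T. a ! i - b ! i\<bar>"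
      by (simp add: sum_subtractf)
    also have "\<dots> \<le> (\<Sum>i\<in>T. \<bar>a ! i - b ! i\<bar>)" by (rule sum_abs)
    also have "\<dots> \<le> (\<Sum>i\<in>T. \<epsilon>)" using close TN N_def by (intro sum_mono) auto
    also have "\<dots> = real K * \<epsilon>" using cT by simp
    finally show ?thesis .
  qed
  have d2: "\<bar>\<Sum>i\<in>S - T. a ! i\<bar> \<le> real K * \<epsilon>"
  proof -
    have "\<bar>\<Sum>i\<in>S - T. a ! i\<bar> \<le> (\<Sum>i\<in>S - T. \<bar>a ! i\<bar>)" by (rule sum_abs)
    also have "\<dots> \<le> (\<Sum>i\<in>S - T. \<epsilon>)" using small SN by (intro sum_mono) auto
    also have "\<dots> = real (card (S - T)) * \<epsilon>" by simp
    also have "\<dots> \<le> real K * \<epsilon>"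
      using card_mono[OF finS, of "S - T"] cS eps by (intro mult_right_mono) auto
    finally show ?thesis .
  qed
  have d3: "\<bar>\<Sum>i\<in>T - S. a ! i\<bar> \<le> real K * \<epsilon>"
  proof -
    have bnd: "\<bar>a ! j\<bar> \<le> \<epsilon>" if j: "j \<in> T - S" for j
    proof -
      have "\<not> S \<subseteq> T"
      proof
        assume "S \<subseteq> T"
        then have "S = T" using card_subset_eq[OF finT] cS cT by metis
        then show False using j by auto
      qed
      then obtain i where i: "i \<in> S" "i \<notin> T" by blast
      have "i < j" using i j unfolding S_def by auto
      moreover have "j < N" using j TN by auto
      ultimately have "\<bar>a ! j\<bar> \<le> \<bar>a ! i\<bar>" using sorted_wrt_nth_less[OF srt] N_def by blast
      also have "\<dots> \<le> \<epsilon>" using small[of i] i SN by auto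
      finally show ?thesis .
    qed
    have "\<bar>\<Sum>i\<in>T - S. a ! i\<bar> \<le> (\<Sum>i\<in>T - S. \<bar>a ! i\<bar>)" by (rule sum_abs)
    also have "\<dots> \<le> (\<Sum>i\<in>T - S. \<epsilon>)" using bnd by (intro sum_mono) auto
    also have "\<dots> = real (card (T - S)) * \<epsilon>" by simp
    also have "\<dots> \<le> real K * \<epsilon>"
      using card_mono[OF finT, of "T - S"] cT eps by (intro mult_right_mono) auto
    finally show ?thesis .
  qed
  have "(\<Sum>i\<in>S. a ! i) = (\<Sum>i\<in>S \<inter> T. a ! i) + (\<Sum>i\<in>S - T. a ! i)"
    using finS by (simp add: sum.Int_Diff)
  moreover have "(\<Sum>i\<in>T. a ! i) = (\<Sum>i\<in>S \<inter> T. a ! i) + (\<Sum>i\<in>T - S. a ! i)"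
    using finT by (metis Int_commute sum.Int_Diff)
  ultimately have "(\<Sum>i\<in>S. a ! i) - (\<Sum>i\<in>T. b ! i) =
      (\<Sum>i\<in>S - T. a ! i) - (\<Sum>i\<in>T - S. a ! i) + ((\<Sum>i\<in>T. a ! i) - (\<Sum>i\<in>T. b ! i))"
    by simp
  then show ?thesis unfolding sa sb using d1 d2 d3 by linarith
qed



theorem lemmaA1:
  fixes A B :: "real^'n^'n" and K :: nat and ea eb :: "real list"
  assumes "transpose A = A" and "transpose B = B"
    and "eigenvalue_list A ea"
    and "sorted_wrt (\<lambda>x y. \<bar>x\<bar> \<ge> \<bar>y\<bar>) ea"
    and "eigenvalue_list B eb"
    and "length (filter (\<lambda>e. e \<noteq> 0) eb) = K"
    and "K \<le> CARD('n)"
  shows "\<bar>sum_list (take K ea) - sum_list (filter (\<lambda>e. e \<noteq> 0) eb)\<bar>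
           \<le> 3 * real K * spec_norm (A - B)"
proof -
  note symA = assms(1) and symB = assms(2)
  obtain P \<alpha> where P: "orthogonal_matrix P" and evA: "\<And>i. A *v column i P = \<alpha> i *\<^sub>R column i P"
    using spectral[OF symA] by blast
  obtain Q \<beta> where Q: "orthogonal_matrix Q" and evB: "\<And>i. B *v column i Q = \<beta> i *\<^sub>R column i Q"
    using spectral[OF symB] by blast
  have la: "length ea = CARD('n)" and lb: "length eb = CARD('n)"
    using assms(3,5) unfolding eigenvalue_list_def by auto
  have ma: "mset ea = image_mset \<alpha> (mset_set UNIV)"
    using assms(3) charpoly_diag[OF P evA] unfolding eigenvalue_list_def
    by (intro mset_from_charpoly) auto
  have mb: "mset eb = image_mset \<beta> (mset_set UNIV)"
    using assms(5) charpoly_diag[OF Q evB] unfolding eigenvalue_list_def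
    by (intro mset_from_charpoly) auto
  define \<epsilon> where "\<epsilon> = spec_norm (A - B)"
  have eps: "\<epsilon> \<ge> 0" unfolding \<epsilon>_def spec_norm_def
    by (rule onorm_pos_le[OF matrix_vector_mul_bounded_linear])
  have key: "\<bar>x \<bullet> (A *v x) - x \<bullet> (B *v x)\<bar> \<le> \<epsilon> * (x \<bullet> x)" for x
  proof -
    have "\<bar>x \<bullet> (A *v x) - x \<bullet> (B *v x)\<bar> = \<bar>x \<bullet> ((A - B) *v x)\<bar>"
      by (simp add: matrix_vector_mult_diff_rdistrib inner_diff_right)
    also have "\<dots> \<le> norm x * norm ((A - B) *v x)" by (rule Cauchy_Schwarz_ineq2)
    also have "\<dots> \<le> norm x * (\<epsilon> * norm x)"
      unfolding \<epsilon>_def spec_norm_def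
      by (intro mult_left_mono onorm[OF matrix_vector_mul_bounded_linear]) auto
    also have "\<dots> = \<epsilon> * (x \<bullet> x)" by (simp add: power2_norm_eq_inner[symmetric] power2_eq_square)
    finally show ?thesis .
  qed
  have cmp1: "x \<bullet> (A *v x) \<le> x \<bullet> (B *v x) + \<epsilon> * (x \<bullet> x)" for x
    using key[of x] unfolding abs_le_iff by linarith
  have cmp2: "x \<bullet> (B *v x) \<le> x \<bullet> (A *v x) + \<epsilon> * (x \<bullet> x)" for x
    using key[of x] unfolding abs_le_iff by linarith
  have c1: "length (filter (\<lambda>e. s + \<epsilon> < e) ea) \<le> length (filter (\<lambda>e. s < e) eb)" for s
  proof -
    have "card {i. s + \<epsilon> < \<alpha> i} \<le> card {i. s < \<beta> i}"
      by (rule weyl_count[OF symA symB P evA Q evB cmp1])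
    then show ?thesis using count_list[OF ma] count_list[OF mb] by simp
  qed
  have c2: "length (filter (\<lambda>e. s + \<epsilon> < e) eb) \<le> length (filter (\<lambda>e. s < e) ea)" for s
  proof -
    have "card {i. s + \<epsilon> < \<beta> i} \<le> card {i. s < \<alpha> i}"
      by (rule weyl_count[OF symB symA Q evB P evA cmp2])
    then show ?thesis using count_list[OF ma] count_list[OF mb] by simp
  qed
  obtain b' where b': "mset b' = mset eb" "length b' = length ea"
    "\<forall>i<length ea. \<bar>ea ! i - b' ! i\<bar> \<le> \<epsilon>"
    using match_lists[of eb ea \<epsilon>, OF _ c1 c2] la lb by auto
  have fb: "sum_list (filter (\<lambda>e. e \<noteq> 0) eb) = sum_list (filter (\<lambda>e. e \<noteq> 0) b')"
    by (metis b'(1) mset_filter sum_mset_sum_list)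
  have fK: "length (filter (\<lambda>e. e \<noteq> 0) b') = K"
    using assms(6) b'(1) by (metis mset_filter size_mset)
  show ?thesis
    unfolding fb \<epsilon>_def[symmetric]
    by (rule final_comb[OF b'(2) b'(3) eps assms(4) fK]) (use assms(7) la in simp)
qed

end
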